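(* There is an absolute constant $C>0$ such that the following holds. Let $G=(V,E)$ be an unweighted graph with maximum vertex degree $d_{\max}$, and let $s,t\in V$ be distinct. Then there is a subset $S\subset V$ with $s\in S$, $t\in V\setminus S$, and $$ \frac{B_{st}^{2}}{R_{st}}\leq C\,d_{\max}\,\Theta(S)^{-2}. $$
   Context: For an unweighted graph with $n$ vertices, $L=D-A$ is the graph Laplacian, $L^{+}$ its Moore–Penrose pseudoinverse, $L^{2+}=(L^+)^2$, and $1_v$ the indicator vector of vertex $v$. The effective resistance is $R_{st}=(1_s-1_t)^{T}L^{+}(1_s-1_t)$ and the biharmonic distance is $B_{st}=\sqrt{(1_s-1_t)^{T}L^{2+}(1_s-1_t)}$. For a nonempty proper subset $S\subset V$, $E(S,V\setminus S)$ is the set of edges with one endpoint in $S$ and one in $V\setminus S$, and $\Theta(S)=\frac{n|E(S,V\setminus S)|}{|S||V\setminus S|}$ (the paper states the conclusion as $B_{st}^2/R_{st}\in O(d_{\max}\Theta(S)^{-2})$). *)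

theory Defs
  imports Complex_Main
begin

text \<open>Matrices indexed by V are functions nat \<Rightarrow> nat \<Rightarrow> real
  vanishing outside V \<times> V.\<close>

type_synonym mat = "nat \<Rightarrow> nat \<Rightarrow> real"

definition mmult :: "nat set \<Rightarrow> mat \<Rightarrow> mat \<Rightarrow> mat" where
  "mmult V A B = (\<lambda>i j. \<Sum>k\<in>V. A i k * B k j)"

definition mtrans :: "mat \<Rightarrow> mat" where
  "mtrans A = (\<lambda>i j. A j i)"

definition supported :: "nat set \<Rightarrow> mat \<Rightarrow> bool" where
  "supported V A \<longleftrightarrow> (\<forall>i j. i \<notin> V \<or> j \<notin> V \<longrightarrow> A i j = 0)"

definition pinv :: "nat set \<Rightarrow> mat \<Rightarrow> mat" where
  "pinv V A = (THE X. supported V X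
      \<and> mmult V (mmult V A X) A = A
      \<and> mmult V (mmult V X A) X = X
      \<and> mtrans (mmult V A X) = mmult V A X
      \<and> mtrans (mmult V X A) = mmult V X A)"

definition simple_graph :: "nat set \<Rightarrow> (nat \<Rightarrow> nat \<Rightarrow> bool) \<Rightarrow> bool" where
  "simple_graph V E \<longleftrightarrow> finite V \<and> (\<forall>u v. E u v \<longrightarrow> u \<in> V \<and> v \<in> V)
      \<and> (\<forall>u v. E u v \<longrightarrow> E v u) \<and> (\<forall>v. \<not> E v v)"

definition degree :: "nat set \<Rightarrow> (nat \<Rightarrow> nat \<Rightarrow> bool) \<Rightarrow> nat \<Rightarrow> nat" where
  "degree V E v = card {u \<in> V. E v u}"

definition dmax :: "nat set \<Rightarrow> (nat \<Rightarrow> nat \<Rightarrow> bool) \<Rightarrow> real" where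
  "dmax V E = real (Max (degree V E ` V))"

definition laplacian :: "nat set \<Rightarrow> (nat \<Rightarrow> nat \<Rightarrow> bool) \<Rightarrow> mat" where
  "laplacian V E = (\<lambda>i j. if i \<in> V \<and> j \<in> V then
      (if i = j then real (degree V E i) else if E i j then -1 else 0) else 0)"

definition quad :: "nat set \<Rightarrow> mat \<Rightarrow> (nat \<Rightarrow> real) \<Rightarrow> real" where
  "quad V M x = (\<Sum>i\<in>V. \<Sum>j\<in>V. x i * M i j * x j)"

definition ind_diff :: "nat \<Rightarrow> nat \<Rightarrow> nat \<Rightarrow> real" where
  "ind_diff s t = (\<lambda>v. (if v = s then 1 else 0) - (if v = t then 1 else 0))"

definition eff_res :: "nat set \<Rightarrow> (nat \<Rightarrow> nat \<Rightarrow> bool) \<Rightarrow> nat \<Rightarrow> nat \<Rightarrow> real" where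
  "eff_res V E s t = quad V (pinv V (laplacian V E)) (ind_diff s t)"

definition biharm :: "nat set \<Rightarrow> (nat \<Rightarrow> nat \<Rightarrow> bool) \<Rightarrow> nat \<Rightarrow> nat \<Rightarrow> real" where
  "biharm V E s t = sqrt (quad V (let P = pinv V (laplacian V E) in mmult V P P) (ind_diff s t))"

definition cut_size :: "nat set \<Rightarrow> (nat \<Rightarrow> nat \<Rightarrow> bool) \<Rightarrow> nat set \<Rightarrow> nat" where
  "cut_size V E S = card {(u, v). u \<in> S \<and> v \<in> V - S \<and> E u v}"

definition Theta :: "nat set \<Rightarrow> (nat \<Rightarrow> nat \<Rightarrow> bool) \<Rightarrow> nat set \<Rightarrow> real" where
  "Theta V E S = real (card V) * real (cut_size V E S) / (real (card S) * real (card (V - S)))"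

end

theory Submission
  imports Defs "HOL-Library.Function_Algebras" "HOL-Analysis.Analysis"
begin



definition msc :: "real \<Rightarrow> mat \<Rightarrow> mat" where
  "msc r A = (\<lambda>i j. r * A i j)"

interpretation mv: vector_space msc
  by unfold_locales (auto simp: msc_def fun_eq_iff algebra_simps)

lemma sum_mat_apply: "(\<Sum>k\<in>K. (f k :: mat)) i j = (\<Sum>k\<in>K. f k i j)"
  by (induction K rule: infinite_finite_induct) auto

lemma mat_zero_lam[simp]: "(\<lambda>a b. 0::real) = (0::mat)"
  by (simp add: fun_eq_iff)

lemma massoc: "mmult V (mmult V A B) C = mmult V A (mmult V B C)"
  unfolding mmult_def
  by (auto simp: fun_eq_iff sum_distrib_left sum_distrib_right mult.assoc intro: sum.swap)

lemma mtrans_mmult: "mtrans (mmult V A B) = mmult V (mtrans B) (mtrans A)"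
  unfolding mmult_def mtrans_def by (auto simp: fun_eq_iff mult.commute)

lemma mtrans_mtrans[simp]: "mtrans (mtrans A) = A"
  unfolding mtrans_def by simp

definition mId :: "nat set \<Rightarrow> mat" where
  "mId V = (\<lambda>i j. if i \<in> V \<and> i = j then 1 else 0)"

fun mpow :: "nat set \<Rightarrow> mat \<Rightarrow> nat \<Rightarrow> mat" where
  "mpow V A 0 = mId V"
| "mpow V A (Suc k) = mmult V A (mpow V A k)"

lemma supported_mmult: "supported V A \<Longrightarrow> supported V B \<Longrightarrow> supported V (mmult V A B)"
  unfolding supported_def mmult_def by auto

lemma supported_mId: "supported V (mId V)"
  unfolding supported_def mId_def by auto

lemma mmult_mId_left: "finite V \<Longrightarrow> supported V A \<Longrightarrow> mmult V (mId V) A = A"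
  unfolding supported_def mmult_def mId_def fun_eq_iff
proof (intro allI)
  fix i j assume "finite V" "\<forall>i j. i \<notin> V \<or> j \<notin> V \<longrightarrow> A i j = 0"
  then show "(\<Sum>k\<in>V. (if i \<in> V \<and> i = k then 1 else 0) * A k j) = A i j"
  proof (cases "i \<in> V")
    case True
    have "(\<Sum>k\<in>V. (if i \<in> V \<and> i = k then 1 else 0) * A k j) = (\<Sum>k\<in>V. if k = i then A i j else 0)"
      by (rule sum.cong) (auto simp: True)
    then show ?thesis using True \<open>finite V\<close> by simp
  qed (auto simp: \<open>\<forall>i j. i \<notin> V \<or> j \<notin> V \<longrightarrow> A i j = 0\<close>)
qed

lemma mmult_mId_right: "finite V \<Longrightarrow> supported V A \<Longrightarrow> mmult V A (mId V) = A"
  unfolding supported_def mmult_def mId_def fun_eq_iff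
proof (intro allI)
  fix i j assume "finite V" "\<forall>i j. i \<notin> V \<or> j \<notin> V \<longrightarrow> A i j = 0"
  then show "(\<Sum>k\<in>V. A i k * (if k \<in> V \<and> k = j then 1 else 0)) = A i j"
  proof (cases "j \<in> V")
    case True
    have "(\<Sum>k\<in>V. A i k * (if k \<in> V \<and> k = j then 1 else 0)) = (\<Sum>k\<in>V. if k = j then A i j else 0)"
      by (rule sum.cong) (auto simp: True)
    then show ?thesis using True \<open>finite V\<close> by simp
  qed (auto simp: \<open>\<forall>i j. i \<notin> V \<or> j \<notin> V \<longrightarrow> A i j = 0\<close> intro!: sum.neutral)
qed

lemma mtrans_mId: "mtrans (mId V) = mId V"
  unfolding mtrans_def mId_def by (auto simp: fun_eq_iff)

lemma mmult_sum_right: "mmult V A (\<Sum>k\<in>K. f k) = (\<Sum>k\<in>K. mmult V A (f k))"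
  unfolding mmult_def
  by (auto simp: fun_eq_iff sum_mat_apply sum_distrib_left intro: sum.swap)

lemma mmult_sum_left: "mmult V (\<Sum>k\<in>K. f k) A = (\<Sum>k\<in>K. mmult V (f k) A)"
  unfolding mmult_def
  by (auto simp: fun_eq_iff sum_mat_apply sum_distrib_right intro: sum.swap)

lemma mmult_msc_right: "mmult V A (msc r B) = msc r (mmult V A B)"
  unfolding mmult_def msc_def by (auto simp: fun_eq_iff sum_distrib_left algebra_simps)

lemma mmult_msc_left: "mmult V (msc r A) B = msc r (mmult V A B)"
  unfolding mmult_def msc_def by (auto simp: fun_eq_iff sum_distrib_left algebra_simps)

lemma mmult_add_right: "mmult V A (B + C) = mmult V A B + mmult V A C"
  unfolding mmult_def by (auto simp: fun_eq_iff sum.distrib algebra_simps)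

lemma mmult_add_left: "mmult V (B + C) A = mmult V B A + mmult V C A"
  unfolding mmult_def by (auto simp: fun_eq_iff sum.distrib algebra_simps)

lemma mmult_zero_right[simp]: "mmult V A 0 = 0"
  unfolding mmult_def by (auto simp: fun_eq_iff)

lemma mmult_zero_left[simp]: "mmult V 0 A = 0"
  unfolding mmult_def by (auto simp: fun_eq_iff)

lemma supported_sum: "(\<And>k. k \<in> K \<Longrightarrow> supported V (f k)) \<Longrightarrow> supported V (\<Sum>k\<in>K. f k)"
  unfolding supported_def by (auto simp: sum_mat_apply)

lemma supported_msc: "supported V A \<Longrightarrow> supported V (msc r A)"
  unfolding supported_def msc_def by auto

lemma supported_add: "supported V A \<Longrightarrow> supported V B \<Longrightarrow> supported V (A + B)"
  unfolding supported_def by auto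

lemma mtrans_sum: "mtrans (\<Sum>k\<in>K. f k) = (\<Sum>k\<in>K. mtrans (f k))"
  unfolding mtrans_def by (auto simp: fun_eq_iff sum_mat_apply)

lemma mtrans_msc: "mtrans (msc r A) = msc r (mtrans A)"
  unfolding mtrans_def msc_def by auto

lemma mtrans_add: "mtrans (A + B) = mtrans A + mtrans B"
  unfolding mtrans_def by (auto simp: fun_eq_iff)

lemma supported_mpow: "supported V A \<Longrightarrow> supported V (mpow V A k)"
  by (induction k) (auto intro: supported_mmult supported_mId)

lemma mpow_comm: "finite V \<Longrightarrow> supported V A \<Longrightarrow> mmult V A (mpow V A k) = mmult V (mpow V A k) A"
proof (induction k)
  case 0 then show ?case by (simp add: mmult_mId_left mmult_mId_right)
next
  case (Suc k)
  then show ?case by (metis massoc mpow.simps(2))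
qed

lemma mpow_add: "finite V \<Longrightarrow> supported V A \<Longrightarrow> mpow V A (a + b) = mmult V (mpow V A a) (mpow V A b)"
proof (induction a)
  case 0 then show ?case by (simp add: mmult_mId_left supported_mpow)
next
  case (Suc a)
  then show ?case by (simp add: massoc)
qed

lemma mpow_sym: "finite V \<Longrightarrow> supported V A \<Longrightarrow> mtrans A = A \<Longrightarrow> mtrans (mpow V A k) = mpow V A k"
proof (induction k)
  case 0 then show ?case by (simp add: mtrans_mId)
next
  case (Suc k)
  then show ?case by (simp add: mtrans_mmult mpow_comm)
qed

lemma kernel_step:
  assumes fin: "finite V" and sA: "supported V A" and sym: "mtrans A = A"
    and h: "mmult V A (mmult V A M) = 0"
  shows "mmult V A M = 0"
proof -
  define N where "N = mmult V A M"
  have symA: "A k l = A l k" for k l using sym unfolding mtrans_def by metis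
  have "N l j = 0" if "l \<in> V" for l j
  proof -
    have "(\<Sum>l\<in>V. N l j * N l j) = (\<Sum>l\<in>V. (\<Sum>k\<in>V. A l k * M k j) * N l j)"
      unfolding N_def mmult_def by simp
    also have "\<dots> = (\<Sum>k\<in>V. M k j * (\<Sum>l\<in>V. A k l * N l j))"
      unfolding sum_distrib_right sum_distrib_left
      by (subst sum.swap) (simp add: symA algebra_simps)
    also have "\<dots> = 0"
      using h unfolding N_def[symmetric] by (simp add: mmult_def fun_eq_iff)
    finally have "(\<Sum>l\<in>V. N l j * N l j) = 0" .
    with fin show ?thesis using that
      by (subst (asm) sum_nonneg_eq_0_iff) auto
  qed
  moreover have "N l j = 0" if "l \<notin> V" for l j
    using sA that unfolding N_def mmult_def supported_def by auto
  ultimately show ?thesis unfolding N_def[symmetric] by (auto simp: fun_eq_iff)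
qed

lemma kernel_pow:
  assumes fin: "finite V" and sA: "supported V A" and sym: "mtrans A = A"
  shows "mmult V (mpow V A k) M = 0 \<Longrightarrow> mmult V A M = 0"
proof (induction k arbitrary: M)
  case 0
  then have "mmult V (mId V) M = 0" by simp
  then have "mmult V A (mmult V (mId V) M) = 0" by (metis mmult_zero_right)
  then show ?case by (metis massoc mmult_mId_right fin sA)
next
  case (Suc k)
  have "mmult V (mpow V A k) (mmult V A M) = 0"
    using Suc.prems by (simp add: massoc[symmetric] mpow_comm[OF fin sA])
  then have "mmult V A (mmult V A M) = 0" by (rule Suc.IH)
  then show ?case by (rule kernel_step[OF fin sA sym])
qed

lemma span_supported:
  assumes fin: "finite V" and sM: "supported V M"
  shows "M \<in> mv.span ((\<lambda>p. (\<lambda>i j. if i = fst p \<and> j = snd p then 1 else 0)) ` (V \<times> V))"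
proof -
  define e :: "nat \<times> nat \<Rightarrow> mat" where "e = (\<lambda>p. (\<lambda>i j. if i = fst p \<and> j = snd p then 1 else 0))"
  have eq: "M = (\<Sum>p\<in>V \<times> V. msc (M (fst p) (snd p)) (e p))"
  proof (intro ext)
    fix i j
    show "M i j = (\<Sum>p\<in>V \<times> V. msc (M (fst p) (snd p)) (e p)) i j"
    proof (cases "i \<in> V \<and> j \<in> V")
      case True
      have "(\<Sum>p\<in>V \<times> V. msc (M (fst p) (snd p)) (e p)) i j
          = (\<Sum>p\<in>V \<times> V. if p = (i, j) then M i j else 0)"
        unfolding sum_mat_apply msc_def e_def by (rule sum.cong) auto
      also have "\<dots> = M i j" using True fin by simp
      finally show ?thesis by simp
    next
      case False
      then have "M i j = 0" using sM unfolding supported_def by auto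
      moreover have "(\<Sum>p\<in>V \<times> V. msc (M (fst p) (snd p)) (e p)) i j = 0"
        unfolding sum_mat_apply msc_def e_def using False by (intro sum.neutral) auto
      ultimately show ?thesis by simp
    qed
  qed
  show ?thesis
    unfolding e_def[symmetric]
    by (subst eq) (intro mv.span_sum mv.span_scale mv.span_base imageI; simp)
qed

lemma powers_dependent:
  assumes fin: "finite V" and sA: "supported V A"
  shows "\<exists>c N. (\<Sum>i\<le>N. msc (c i) (mpow V A i)) = 0 \<and> (\<exists>i\<le>N. c i \<noteq> 0)"
proof (cases "inj_on (mpow V A) {..card V * card V}")
  case True
  define N where "N = card V * card V"
  define T where "T = (\<lambda>p. (\<lambda>i j. if i = fst p \<and> j = snd p then 1 else 0) :: mat) ` (V \<times> V)"
  define S where "S = mpow V A ` {..N}"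
  have fT: "finite T" unfolding T_def using fin by simp
  have cT: "card T \<le> N" unfolding T_def N_def
    using card_image_le[of "V \<times> V"] fin by (simp add: card_cartesian_product)
  have cS: "card S = Suc N" unfolding S_def using True N_def by (simp add: card_image)
  have spS: "S \<subseteq> mv.span T"
    unfolding S_def T_def using span_supported[OF fin] supported_mpow[OF sA] by auto
  have "mv.dependent S"
  proof (rule ccontr)
    assume "\<not> mv.dependent S"
    from mv.independent_span_bound[OF fT this spS] have "card S \<le> card T" by simp
    with cS cT show False by simp
  qed
  then obtain t u where t: "finite t" "t \<subseteq> S" "(\<Sum>v\<in>t. msc (u v) v) = 0" "\<exists>v\<in>t. u v \<noteq> 0"
    unfolding mv.dependent_explicit by blast
  define c where "c i = (if mpow V A i \<in> t then u (mpow V A i) else 0)" for i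
  define I where "I = {i\<in>{..N}. mpow V A i \<in> t}"
  have "(\<Sum>i\<le>N. msc (c i) (mpow V A i)) = (\<Sum>i\<in>I. msc (c i) (mpow V A i))"
    unfolding I_def by (rule sum.mono_neutral_right) (auto simp: c_def)
  also have "\<dots> = (\<Sum>i\<in>I. msc (u (mpow V A i)) (mpow V A i))"
    unfolding I_def c_def by (rule sum.cong) auto
  also have "\<dots> = (\<Sum>v\<in>mpow V A ` I. msc (u v) v)"
    using True unfolding N_def[symmetric] I_def
    by (subst sum.reindex) (auto intro: inj_on_subset)
  also have "mpow V A ` I = t" using t(2) unfolding I_def S_def by auto
  finally have "(\<Sum>i\<le>N. msc (c i) (mpow V A i)) = 0" using t(3) by simp
  moreover have "\<exists>i\<le>N. c i \<noteq> 0"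
    using t(2,4) unfolding S_def c_def by auto
  ultimately show ?thesis by blast
next
  case False
  then obtain i j where ij: "i \<le> card V * card V" "j \<le> card V * card V" "i \<noteq> j" "mpow V A i = mpow V A j"
    unfolding inj_on_def by auto
  define N where "N = card V * card V"
  define c where "c k = (if k = i then 1 else 0) - (if k = j then (1::real) else 0)" for k
  have "(\<Sum>k\<le>N. msc (c k) (mpow V A k)) = 0"
  proof (intro ext)
    fix a b
    have "(\<Sum>k\<le>N. msc (c k) (mpow V A k)) a b
        = (\<Sum>k\<le>N. (if k = i then mpow V A i a b else 0) - (if k = j then mpow V A j a b else 0))"
      unfolding sum_mat_apply msc_def c_def by (rule sum.cong) auto
    also have "\<dots> = 0" using ij unfolding N_def[symmetric] by (simp add: sum_subtractf)
    finally show "(\<Sum>k\<le>N. msc (c k) (mpow V A k)) a b = 0 a b" by simp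
  qed
  moreover have "c i \<noteq> 0" using ij unfolding c_def by simp
  ultimately show ?thesis using ij unfolding N_def by blast
qed

lemma polysum_props:
  fixes K :: "nat set" and d :: "nat \<Rightarrow> real" and h :: "nat \<Rightarrow> nat"
  assumes fin: "finite V" and sA: "supported V A" and sym: "mtrans A = A"
  defines "R \<equiv> (\<Sum>i\<in>K. msc (d i) (mpow V A (h i)))"
  shows "supported V R" "mtrans R = R" "mmult V A R = mmult V R A"
proof -
  show "supported V R" unfolding R_def
    by (intro supported_sum supported_msc supported_mpow sA)
  show "mtrans R = R" unfolding R_def
    by (simp add: mtrans_sum mtrans_msc mpow_sym[OF fin sA sym])
  show "mmult V A R = mmult V R A" unfolding R_def
    by (simp add: mmult_sum_right mmult_sum_left mmult_msc_right mmult_msc_left mpow_comm[OF fin sA])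
qed

lemma Q_exists:
  assumes fin: "finite V" and sA: "supported V A" and sym: "mtrans A = A"
  shows "\<exists>Q. supported V Q \<and> mtrans Q = Q \<and> mmult V A Q = mmult V Q A \<and> mmult V A (mmult V A Q) = A"
proof -
  obtain c N where cN: "(\<Sum>i\<le>N. msc (c i) (mpow V A i)) = 0" "\<exists>i\<le>N. c i \<noteq> 0"
    using powers_dependent[OF fin sA] by blast
  define k where "k = (LEAST i. i \<le> N \<and> c i \<noteq> 0)"
  have k: "k \<le> N" "c k \<noteq> 0"
    using LeastI_ex[OF cN(2)] unfolding k_def by auto
  have below: "c i = 0" if "i < k" for i
    using not_less_Least[of i "\<lambda>i. i \<le> N \<and> c i \<noteq> 0"] that k(1) unfolding k_def by auto
  define R where "R = (\<Sum>i\<in>{Suc k..N}. msc (c i) (mpow V A (i - Suc k)))"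
  note Rp = polysum_props[OF fin sA sym, of c "\<lambda>i. i - Suc k" "{Suc k..N}", folded R_def]
  define M where "M = msc (c k) (mId V) + mmult V A R"
  have "mmult V (mpow V A k) M = msc (c k) (mpow V A k) + (\<Sum>i\<in>{Suc k..N}. msc (c i) (mpow V A i))"
  proof -
    have "mmult V (mpow V A k) M = msc (c k) (mpow V A k) + (\<Sum>i\<in>{Suc k..N}. msc (c i) (mmult V (mpow V A k) (mmult V A (mpow V A (i - Suc k)))))"
      unfolding M_def R_def
      by (simp add: mmult_add_right mmult_msc_right mmult_sum_right mmult_mId_right fin supported_mpow sA)
    also have "(\<Sum>i\<in>{Suc k..N}. msc (c i) (mmult V (mpow V A k) (mmult V A (mpow V A (i - Suc k)))))
        = (\<Sum>i\<in>{Suc k..N}. msc (c i) (mpow V A i))"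
    proof (rule sum.cong)
      fix i assume "i \<in> {Suc k..N}"
      then have "i = k + Suc (i - Suc k)" by auto
      then have "mpow V A i = mmult V (mpow V A k) (mpow V A (Suc (i - Suc k)))"
        by (metis mpow_add fin sA)
      then show "msc (c i) (mmult V (mpow V A k) (mmult V A (mpow V A (i - Suc k)))) = msc (c i) (mpow V A i)"
        by simp
    qed simp
    finally show ?thesis .
  qed
  also have "\<dots> = (\<Sum>i\<le>N. msc (c i) (mpow V A i))"
  proof -
    have "{..N} = {..<k} \<union> {k..N}" using k by auto
    then have "(\<Sum>i\<le>N. msc (c i) (mpow V A i)) = (\<Sum>i\<in>{..<k}. msc (c i) (mpow V A i)) + (\<Sum>i\<in>{k..N}. msc (c i) (mpow V A i))"
      by (subst sum.union_disjoint[symmetric]) auto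
    also have "(\<Sum>i\<in>{..<k}. msc (c i) (mpow V A i)) = 0"
      by (intro sum.neutral) (simp add: below)
    also have "(\<Sum>i\<in>{k..N}. msc (c i) (mpow V A i)) = msc (c k) (mpow V A k) + (\<Sum>i\<in>{Suc k..N}. msc (c i) (mpow V A i))"
      using k by (simp add: sum.atLeast_Suc_atMost)
    finally show ?thesis by (metis add.left_neutral)
  qed
  finally have "mmult V (mpow V A k) M = 0" using cN(1) by simp
  then have AM: "mmult V A M = 0" by (rule kernel_pow[OF fin sA sym])
  have AM': "mmult V A M = msc (c k) A + mmult V A (mmult V A R)"
    unfolding M_def by (simp add: mmult_add_right mmult_msc_right mmult_mId_right fin sA massoc)
  define Q where "Q = msc (-1 / c k) R"
  have "mmult V A (mmult V A Q) = A"
  proof (intro ext)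
    fix i j
    have "c k * A i j + mmult V A (mmult V A R) i j = 0"
      using AM AM' by (metis msc_def plus_fun_apply zero_fun_apply)
    moreover have "mmult V A (mmult V A Q) = msc (-1 / c k) (mmult V A (mmult V A R))"
      unfolding Q_def by (simp only: mmult_msc_right)
    ultimately show "mmult V A (mmult V A Q) i j = A i j"
      using k(2) by (simp add: msc_def field_simps)
  qed
  moreover have "supported V Q" unfolding Q_def by (intro supported_msc Rp(1))
  moreover have "mtrans Q = Q" unfolding Q_def by (simp only: mtrans_msc Rp(2))
  moreover have "mmult V A Q = mmult V Q A" unfolding Q_def by (simp only: mmult_msc_right mmult_msc_left Rp(3))
  ultimately show ?thesis by blast
qed

lemma penrose_unique:
  assumes sym: "mtrans A = A"
    and X1: "mmult V (mmult V A X) A = A" and X2: "mmult V (mmult V X A) X = X"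
    and X3: "mtrans (mmult V A X) = mmult V A X" and X4: "mtrans (mmult V X A) = mmult V X A"
    and Y1: "mmult V (mmult V A Y) A = A" and Y2: "mmult V (mmult V Y A) Y = Y"
    and Y3: "mtrans (mmult V A Y) = mmult V A Y" and Y4: "mtrans (mmult V Y A) = mmult V Y A"
  shows "X = Y"
proof -
  have a: "mmult V (mtrans X) A = mmult V (mmult V A X) (mmult V A Y)"
  proof -
    have "mmult V (mtrans X) A = mtrans (mmult V A X)" by (simp add: mtrans_mmult sym)
    also have "\<dots> = mtrans (mmult V (mmult V (mmult V A Y) A) X)" using Y1 by simp
    also have "\<dots> = mtrans (mmult V (mmult V A Y) (mmult V A X))" by (simp add: massoc)
    also have "\<dots> = mmult V (mmult V A X) (mmult V A Y)" by (simp only: mtrans_mmult[of V "mmult V A Y" "mmult V A X"] X3 Y3)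
    finally show ?thesis .
  qed
  have x: "X = mmult V X (mmult V A Y)"
  proof -
    have "X = mmult V X (mmult V A X)" using X2 by (simp add: massoc)
    also have "\<dots> = mmult V X (mmult V (mtrans X) A)" using X3 by (simp add: mtrans_mmult sym)
    also have "\<dots> = mmult V (mmult V (mmult V X A) X) (mmult V A Y)" by (simp add: a massoc)
    also have "\<dots> = mmult V X (mmult V A Y)" using X2 by simp
    finally show ?thesis .
  qed
  have b: "mmult V A (mtrans Y) = mmult V (mmult V X A) (mmult V Y A)"
  proof -
    have "mmult V A (mtrans Y) = mtrans (mmult V Y A)" by (simp add: mtrans_mmult sym)
    also have "\<dots> = mtrans (mmult V Y (mmult V (mmult V A X) A))" using X1 by simp
    also have "\<dots> = mtrans (mmult V (mmult V Y A) (mmult V X A))" by (simp add: massoc)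
    also have "\<dots> = mmult V (mmult V X A) (mmult V Y A)" by (simp only: mtrans_mmult[of V "mmult V Y A" "mmult V X A"] X4 Y4)
    finally show ?thesis .
  qed
  have y: "Y = mmult V X (mmult V A Y)"
  proof -
    have "Y = mmult V (mmult V Y A) Y" using Y2 by simp
    also have "\<dots> = mmult V (mmult V A (mtrans Y)) Y" using Y4 by (simp add: mtrans_mmult sym)
    also have "\<dots> = mmult V (mmult V X A) (mmult V (mmult V Y A) Y)" by (simp add: b massoc)
    also have "\<dots> = mmult V X (mmult V A Y)" using Y2 by (simp add: massoc)
    finally show ?thesis .
  qed
  show ?thesis using x y by simp
qed

lemma pinv_props:
  assumes fin: "finite V" and sA: "supported V A" and sym: "mtrans A = A"
  shows "supported V (pinv V A) \<and> mtrans (pinv V A) = pinv V A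
    \<and> mmult V A (pinv V A) = mmult V (pinv V A) A
    \<and> mmult V (mmult V (pinv V A) A) (pinv V A) = pinv V A
    \<and> mmult V (mmult V A (pinv V A)) A = A"
proof -
  obtain Q where Q: "supported V Q" "mtrans Q = Q" "mmult V A Q = mmult V Q A" "mmult V A (mmult V A Q) = A"
    using Q_exists[OF fin sA sym] by blast
  define P where "P = mmult V A (mmult V Q Q)"
  have e4: "mmult V (mmult V A Q) A = A"
    by (metis Q(3) Q(4) massoc)
  have AP: "mmult V A P = mmult V A Q" unfolding P_def using Q(4) by (metis massoc)
  have PA: "mmult V P A = mmult V A Q"
  proof -
    have "mmult V P A = mmult V A (mmult V Q (mmult V Q A))" unfolding P_def by (simp add: massoc)
    also have "\<dots> = mmult V (mmult V A (mmult V A Q)) Q" using Q(3) by (simp add: massoc)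
    also have "\<dots> = mmult V A Q" using Q(4) by simp
    finally show ?thesis .
  qed
  have E: "mtrans (mmult V A Q) = mmult V A Q" using Q(2,3) sym by (simp add: mtrans_mmult)
  have sP: "supported V P" unfolding P_def by (intro supported_mmult sA Q(1))
  have symP: "mtrans P = P"
  proof -
    have "mtrans P = mmult V Q (mmult V Q A)" unfolding P_def by (simp add: mtrans_mmult Q(2) sym massoc)
    also have "\<dots> = P" unfolding P_def using Q(3) by (metis massoc)
    finally show ?thesis .
  qed
  have P1: "mmult V (mmult V A P) A = A" using AP e4 by simp
  have P2: "mmult V (mmult V P A) P = P" unfolding PA
    by (simp add: P_def e4 massoc[symmetric])
  have P3: "mtrans (mmult V A P) = mmult V A P" using AP E by simp
  have P4: "mtrans (mmult V P A) = mmult V P A" using PA E by simp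
  have "pinv V A = P"
    unfolding pinv_def
  proof (rule the_equality)
    show "supported V P \<and> mmult V (mmult V A P) A = A \<and> mmult V (mmult V P A) P = P
      \<and> mtrans (mmult V A P) = mmult V A P \<and> mtrans (mmult V P A) = mmult V P A"
      using sP P1 P2 P3 P4 by blast
    fix X assume "supported V X \<and> mmult V (mmult V A X) A = A \<and> mmult V (mmult V X A) X = X
      \<and> mtrans (mmult V A X) = mmult V A X \<and> mtrans (mmult V X A) = mmult V X A"
    then show "X = P" using penrose_unique[OF sym _ _ _ _ P1 P2 P3 P4] by blast
  qed
  then show ?thesis using sP symP AP PA P2 P1 by simp
qed



lemma card_pairs_sum:
  assumes "finite A" "finite B"
  shows "real (card {(u, v). u \<in> A \<and> v \<in> B \<and> P u v}) = (\<Sum>u\<in>A. \<Sum>v\<in>B. if P u v then 1 else 0)"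
proof -
  have "{(u, v). u \<in> A \<and> v \<in> B \<and> P u v} = Sigma A (\<lambda>u. {v\<in>B. P u v})" by auto
  then have "card {(u, v). u \<in> A \<and> v \<in> B \<and> P u v} = (\<Sum>u\<in>A. card {v\<in>B. P u v})"
    using assms by (simp add: card_SigmaI)
  moreover have "real (card {v\<in>B. P u v}) = (\<Sum>v\<in>B. if P u v then 1 else 0)" for u
  proof -
    have "real (card {v\<in>B. P u v}) = (\<Sum>v\<in>{v\<in>B. P u v}. 1)" by simp
    also have "\<dots> = (\<Sum>v\<in>B. if P u v then 1 else 0)" by (simp only: sum.inter_filter[OF assms(2)])
    finally show ?thesis .
  qed
  ultimately show ?thesis by simp
qed

lemma ind_integral:
  fixes a b lo hi :: real
  assumes "lo \<le> a" "b \<le> hi"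
  shows "((\<lambda>\<theta>. if a \<le> \<theta> \<and> \<theta> < b then 1 else 0) has_integral max 0 (b - a)) {lo..hi}"
proof (cases "a < b")
  case True
  have "((\<lambda>\<theta>::real. 1::real) has_integral (b - a)) {a..b}"
    using has_integral_const_real[of "1::real" a b] True by simp
  then have "((\<lambda>\<theta>. if \<theta> \<in> cbox a b then (1::real) else 0) has_integral (b - a)) (cbox lo hi)"
    using assms True by (intro has_integral_restrict_closed_subinterval) (auto simp: cbox_interval)
  then have X: "((\<lambda>\<theta>. if \<theta> \<in> {a..b} then (1::real) else 0) has_integral (b - a)) {lo..hi}"
    by (simp add: cbox_interval)
  have "((\<lambda>\<theta>. if a \<le> \<theta> \<and> \<theta> < b then 1 else 0) has_integral (b - a)) {lo..hi}"
    by (rule has_integral_spike_finite[OF _ _ X, where S="{b}"]) auto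
  then show ?thesis using True by simp
next
  case False
  then have "(\<lambda>\<theta>::real. if a \<le> \<theta> \<and> \<theta> < b then 1 else (0::real)) = (\<lambda>\<theta>. 0)" by auto
  then show ?thesis using False by simp
qed

lemma coarea:
  fixes g :: "nat \<Rightarrow> real"
  assumes G: "simple_graph V E" and st: "s \<in> V" "t \<in> V"
    and gst: "g t < g s" and rng: "\<forall>v\<in>V. g t \<le> g v \<and> g v \<le> g s"
  shows "\<exists>S\<subseteq>V. s \<in> S \<and> t \<in> V - S \<and>
    real (cut_size V E S) * (\<Sum>u\<in>V. \<Sum>v\<in>V. max 0 (g u - g v))
      \<le> 2 * (\<Sum>u\<in>V. \<Sum>v\<in>V. if E u v then max 0 (g u - g v) else 0) * real (card S * card (V - S))"
proof (rule ccontr)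
  define Num where "Num = (\<Sum>u\<in>V. \<Sum>v\<in>V. if E u v then max 0 (g u - g v) else 0)"
  define Den where "Den = (\<Sum>u\<in>V. \<Sum>v\<in>V. max 0 (g u - g v))"
  define Sth where "Sth \<theta> = {v\<in>V. \<theta> < g v}" for \<theta>
  define ind where "ind u v \<theta> = (if g v \<le> \<theta> \<and> \<theta> < g u then 1 else 0::real)" for u v \<theta>
  define cutr where "cutr \<theta> = (\<Sum>u\<in>V. \<Sum>v\<in>V. if E u v then ind u v \<theta> else 0)" for \<theta>
  define ssr where "ssr \<theta> = (\<Sum>u\<in>V. \<Sum>v\<in>V. ind u v \<theta>)" for \<theta>
  have fin: "finite V" using G unfolding simple_graph_def by auto
  have EV: "E u v \<Longrightarrow> u \<in> V \<and> v \<in> V" for u v using G unfolding simple_graph_def by auto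
  assume "\<not> ?thesis"
  note nt = this
  have H: "2 * Num * real (card S * card (V - S)) < real (cut_size V E S) * Den"
    if "S \<subseteq> V" "s \<in> S" "t \<in> V - S" for S
  proof -
    have "\<not> (real (cut_size V E S) * Den \<le> 2 * Num * real (card S * card (V - S)))"
      using nt that unfolding Num_def Den_def by blast
    then show ?thesis by linarith
  qed
  have cut_eq: "real (cut_size V E (Sth \<theta>)) = cutr \<theta>" for \<theta>
  proof -
    have "{(u, v). u \<in> Sth \<theta> \<and> v \<in> V - Sth \<theta> \<and> E u v} = {(u, v). u \<in> V \<and> v \<in> V \<and> (E u v \<and> g v \<le> \<theta> \<and> \<theta> < g u)}"
      unfolding Sth_def using EV by auto
    then have "real (cut_size V E (Sth \<theta>)) = (\<Sum>u\<in>V. \<Sum>v\<in>V. if E u v \<and> g v \<le> \<theta> \<and> \<theta> < g u then 1 else 0)"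
      unfolding cut_size_def by (simp only: card_pairs_sum[OF fin fin])
    also have "\<dots> = cutr \<theta>" unfolding cutr_def ind_def
      by (intro sum.cong refl) auto
    finally show ?thesis .
  qed
  have ss_eq: "real (card (Sth \<theta>) * card (V - Sth \<theta>)) = ssr \<theta>" for \<theta>
  proof -
    have "Sth \<theta> \<times> (V - Sth \<theta>) = {(u, v). u \<in> V \<and> v \<in> V \<and> (g v \<le> \<theta> \<and> \<theta> < g u)}"
      unfolding Sth_def by auto
    then have "card (Sth \<theta>) * card (V - Sth \<theta>) = card {(u, v). u \<in> V \<and> v \<in> V \<and> (g v \<le> \<theta> \<and> \<theta> < g u)}"
      by (metis card_cartesian_product)
    then show ?thesis unfolding ssr_def ind_def by (simp add: card_pairs_sum[OF fin fin])
  qed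
  have iint: "(ind u v has_integral max 0 (g u - g v)) {g t..g s}" if "u \<in> V" "v \<in> V" for u v
    unfolding ind_def[abs_def] using rng that by (intro ind_integral) auto
  have cut_int: "(cutr has_integral Num) {g t..g s}"
    unfolding cutr_def[abs_def] Num_def
    by (intro has_integral_sum fin) (auto intro: iint)
  have ss_int: "(ssr has_integral Den) {g t..g s}"
    unfolding ssr_def[abs_def] Den_def
    by (intro has_integral_sum fin) (auto intro: iint)
  have hpos: "0 \<le> cutr \<theta> * Den - 2 * Num * ssr \<theta>" if "\<theta> \<in> {g t..g s}" for \<theta>
  proof (cases "\<theta> < g s")
    case True
    have "Sth \<theta> \<subseteq> V" "s \<in> Sth \<theta>" "t \<in> V - Sth \<theta>"
      using True that st unfolding Sth_def by auto
    from H[OF this] show ?thesis unfolding cut_eq ss_eq by simp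
  next
    case False
    then have "\<theta> = g s" using that by auto
    then have "Sth \<theta> = {}" using rng unfolding Sth_def by force
    then show ?thesis using cut_eq[of \<theta>] ss_eq[of \<theta>] by (simp add: cut_size_def)
  qed
  have HI: "((\<lambda>\<theta>. cutr \<theta> * Den - 2 * Num * ssr \<theta>) has_integral (Num * Den - 2 * Num * Den)) {g t..g s}"
    by (rule has_integral_diff[OF has_integral_mult_left[OF cut_int] has_integral_mult_right[OF ss_int]])
  have "0 \<le> Num * Den - 2 * Num * Den"
    by (rule has_integral_le[OF has_integral_0 HI hpos])
  then have ND: "Num * Den \<le> 0" by (simp add: algebra_simps)
  have Dpos: "0 < Den"
  proof -
    have "0 < max 0 (g s - g t)" using gst by simp
    also have "\<dots> \<le> (\<Sum>v\<in>V. max 0 (g s - g v))"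
      using st fin by (intro member_le_sum[where f="\<lambda>v. max 0 (g s - g v)"]) auto
    also have "\<dots> \<le> Den" unfolding Den_def
      using st fin by (intro member_le_sum[where f="\<lambda>u. \<Sum>v\<in>V. max 0 (g u - g v)"] sum_nonneg) auto
    finally show ?thesis .
  qed
  have Nnn: "0 \<le> Num" unfolding Num_def by (intro sum_nonneg) auto
  have Npos: "0 < Num"
  proof -
    have "Sth (g t) \<subseteq> V" "s \<in> Sth (g t)" "t \<in> V - Sth (g t)"
      using gst st unfolding Sth_def by auto
    from H[OF this] Nnn Dpos have "0 < real (cut_size V E (Sth (g t)))"
      by (smt (verit) mult_nonneg_nonneg of_nat_0_le_iff zero_less_mult_pos2)
    then have "0 < cutr (g t)" using cut_eq by simp
    have "\<exists>u\<in>V. \<exists>v\<in>V. E u v \<and> ind u v (g t) \<noteq> 0"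
    proof (rule ccontr)
      assume "\<not> (\<exists>u\<in>V. \<exists>v\<in>V. E u v \<and> ind u v (g t) \<noteq> 0)"
      then have "cutr (g t) = 0" unfolding cutr_def by (intro sum.neutral ballI) auto
      with \<open>0 < cutr (g t)\<close> show False by simp
    qed
    then obtain u v where uv: "u \<in> V" "v \<in> V" "E u v" "ind u v (g t) \<noteq> 0"
      by blast
    then have "0 < max 0 (g u - g v)" unfolding ind_def by (auto split: if_splits)
    also have "\<dots> \<le> (\<Sum>v'\<in>V. if E u v' then max 0 (g u - g v') else 0)"
    proof -
      have "(\<lambda>v'. if E u v' then max 0 (g u - g v') else 0) v \<le> (\<Sum>v'\<in>V. if E u v' then max 0 (g u - g v') else 0)"
        by (rule member_le_sum) (use uv fin in auto)
      then show ?thesis using uv by simp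
    qed
    also have "\<dots> \<le> Num" unfolding Num_def
      using uv fin by (intro member_le_sum[where f="\<lambda>u. \<Sum>v\<in>V. if E u v then max 0 (g u - g v) else 0"] sum_nonneg) auto
    finally show ?thesis .
  qed
  from ND Dpos Npos show False by (metis mult_pos_pos not_less)
qed




definition Dform :: "nat set \<Rightarrow> (nat \<Rightarrow> nat \<Rightarrow> bool) \<Rightarrow> (nat \<Rightarrow> real) \<Rightarrow> (nat \<Rightarrow> real) \<Rightarrow> real" where
  "Dform V E y z = (\<Sum>i\<in>V. \<Sum>j\<in>V. if E i j then (y i - y j) * (z i - z j) else 0)"

lemma lap_apply:
  assumes G: "simple_graph V E" and i: "i \<in> V"
  shows "(\<Sum>j\<in>V. laplacian V E i j * z j) = (\<Sum>j\<in>V. if E i j then z i - z j else 0)"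
proof -
  have fin: "finite V" using G unfolding simple_graph_def by auto
  have irr: "\<not> E i i" using G unfolding simple_graph_def by auto
  have "(\<Sum>j\<in>V. laplacian V E i j * z j)
      = (\<Sum>j\<in>V. (if j = i then real (Defs.degree V E i) * z i else 0) - (if E i j then z j else 0))"
    using i irr by (intro sum.cong refl) (auto simp: laplacian_def)
  also have "\<dots> = real (Defs.degree V E i) * z i - (\<Sum>j\<in>V. if E i j then z j else 0)"
    using i fin by (simp add: sum_subtractf)
  also have "real (Defs.degree V E i) = (\<Sum>j\<in>V. if E i j then 1 else 0)"
    unfolding Defs.degree_def using fin by (simp add: sum.inter_filter[symmetric])
  also have "(\<Sum>j\<in>V. if E i j then 1 else 0) * z i - (\<Sum>j\<in>V. if E i j then z j else 0)
      = (\<Sum>j\<in>V. if E i j then z i - z j else 0)"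
    by (simp add: sum_distrib_right sum_subtractf[symmetric] if_distrib cong: if_cong)
  finally show ?thesis .
qed

lemma lap_form:
  assumes G: "simple_graph V E"
  shows "(\<Sum>i\<in>V. y i * (\<Sum>j\<in>V. laplacian V E i j * z j)) = Dform V E y z / 2"
proof -
  have sym: "E i j = E j i" for i j using G unfolding simple_graph_def by blast
  define T where "T = (\<Sum>i\<in>V. \<Sum>j\<in>V. if E i j then y i * (z i - z j) else 0)"
  have "(\<Sum>i\<in>V. y i * (\<Sum>j\<in>V. laplacian V E i j * z j)) = T"
    unfolding T_def using G
    by (intro sum.cong refl) (simp add: lap_apply sum_distrib_left if_distrib cong: if_cong)
  moreover have "T = (\<Sum>i\<in>V. \<Sum>j\<in>V. if E i j then y j * (z j - z i) else 0)"
    unfolding T_def by (subst sum.swap) (simp add: sym)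
  moreover have "T + (\<Sum>i\<in>V. \<Sum>j\<in>V. if E i j then y j * (z j - z i) else 0) = Dform V E y z"
    unfolding T_def Dform_def sum.distrib[symmetric]
    by (intro sum.cong refl) (auto simp: algebra_simps)
  ultimately show ?thesis by simp
qed

lemma sum_ind_diff:
  assumes "finite V" "s \<in> V" "t \<in> V" "s \<noteq> t"
  shows "(\<Sum>i\<in>V. f i * ind_diff s t i) = f s - f t"
proof -
  have "(\<Sum>i\<in>V. f i * ind_diff s t i) = (\<Sum>i\<in>V. (if i = s then f s else 0) - (if i = t then f t else 0))"
    unfolding ind_diff_def by (intro sum.cong refl) auto
  also have "\<dots> = f s - f t" using assms by (simp add: sum_subtractf)
  finally show ?thesis .
qed


lemma a1: "0 \<le> x \<Longrightarrow> (x::real) \<le> y \<Longrightarrow> x * x \<le> y * y"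
  by (simp add: mult_mono)
lemma a2: "(x::real) \<le> y \<Longrightarrow> y < 0 \<Longrightarrow> y * y \<le> x * x"
  using a1[of "-y" "-x"] by simp
lemma xabs_mono:
  assumes "(x::real) \<le> y" shows "x * \<bar>x\<bar> \<le> y * \<bar>y\<bar>"
proof -
  consider "0 \<le> x" | "x < 0" "0 \<le> y" | "y < 0" using assms by linarith
  then show ?thesis
  proof cases
    case 1 then show ?thesis using a1[OF 1 assms] assms by simp
  next
    case 2 then show ?thesis by (simp add: mult_neg_pos)
  next
    case 3 then show ?thesis using a2[OF assms 3] assms by simp
  qed
qed
lemma xabs_upper: "\<bar>(x::real) * \<bar>x\<bar> - y * \<bar>y\<bar>\<bar> \<le> \<bar>x - y\<bar> * (\<bar>x\<bar> + \<bar>y\<bar>)"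
proof -
  consider "0 \<le> x" "0 \<le> y" | "x < 0" "y < 0" | "0 \<le> x" "y < 0" | "x < 0" "0 \<le> y" by linarith
  then show ?thesis
  proof cases
    case 1
    have "\<bar>x * x - y * y\<bar> = \<bar>x - y\<bar> * \<bar>x + y\<bar>" by (simp add: abs_mult[symmetric] algebra_simps)
    then show ?thesis using 1 by simp
  next
    case 2
    have "\<bar>- (x * x) + y * y\<bar> = \<bar>x - y\<bar> * \<bar>x + y\<bar>" by (simp add: abs_mult[symmetric] algebra_simps)
    then show ?thesis using 2 by simp
  next
    case 3
    have "x * x + y * y \<le> (x - y) * (x - y)" using 3 by (simp add: algebra_simps mult_nonneg_nonpos)
    moreover have "x * \<bar>x\<bar> - y * \<bar>y\<bar> = x * x + y * y" using 3 by simp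
    moreover have "\<bar>x - y\<bar> * (\<bar>x\<bar> + \<bar>y\<bar>) = (x - y) * (x - y)" using 3 by simp
    moreover have "0 \<le> x * x + y * y" by simp
    ultimately show ?thesis by simp
  next
    case 4
    have "x * x + y * y \<le> (y - x) * (y - x)" using 4 by (simp add: algebra_simps mult_nonneg_nonpos2)
    moreover have "x * \<bar>x\<bar> - y * \<bar>y\<bar> = - (x * x + y * y)" using 4 by simp
    moreover have "\<bar>x - y\<bar> * (\<bar>x\<bar> + \<bar>y\<bar>) = (y - x) * (y - x)" using 4 by simp
    moreover have "0 \<le> x * x + y * y" by simp
    ultimately show ?thesis by simp
  qed
qed
lemma xabs_lower: "((x::real) - y)^2 \<le> 2 * \<bar>x * \<bar>x\<bar> - y * \<bar>y\<bar>\<bar>"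
proof -
  consider "0 \<le> x" "0 \<le> y" | "x < 0" "y < 0" | "0 \<le> x" "y < 0" | "x < 0" "0 \<le> y" by linarith
  then show ?thesis
  proof cases
    case 1
    have "x * \<bar>x\<bar> - y * \<bar>y\<bar> = (x - y) * (x + y)" using 1 by (simp add: algebra_simps)
    then have e: "\<bar>x * \<bar>x\<bar> - y * \<bar>y\<bar>\<bar> = \<bar>x - y\<bar> * (x + y)"
      using 1 by (simp add: abs_mult)
    have "(x - y)^2 = \<bar>x - y\<bar> * \<bar>x - y\<bar>" by (simp add: power2_eq_square)
    also have "\<dots> \<le> \<bar>x - y\<bar> * (x + y)" using 1 by (intro mult_left_mono) auto
    finally show ?thesis using e by simp
  next
    case 2
    have "x * \<bar>x\<bar> - y * \<bar>y\<bar> = (x - y) * (- x - y)" using 2 by (simp add: algebra_simps)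
    then have e: "\<bar>x * \<bar>x\<bar> - y * \<bar>y\<bar>\<bar> = \<bar>x - y\<bar> * (- x - y)"
      using 2 by (simp add: abs_mult)
    have "(x - y)^2 = \<bar>x - y\<bar> * \<bar>x - y\<bar>" by (simp add: power2_eq_square)
    also have "\<dots> \<le> \<bar>x - y\<bar> * (- x - y)" using 2 by (intro mult_left_mono) auto
    finally show ?thesis using e by simp
  next
    case 3
    have "\<bar>x * \<bar>x\<bar> - y * \<bar>y\<bar>\<bar> = x * x + y * y" using 3 by simp
    moreover have "(x - y)^2 \<le> 2 * (x * x + y * y)"
      using zero_le_square[of "x + y"] by (simp add: power2_eq_square algebra_simps)
    ultimately show ?thesis by simp
  next
    case 4
    have "\<bar>x * \<bar>x\<bar> - y * \<bar>y\<bar>\<bar> = x * x + y * y" using 4 by simp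
    moreover have "(x - y)^2 \<le> 2 * (x * x + y * y)"
      using zero_le_square[of "x + y"] by (simp add: power2_eq_square algebra_simps)
    ultimately show ?thesis by simp
  qed
qed

lemma b1: "0 \<le> x \<Longrightarrow> (x::real) < y \<Longrightarrow> x * x < y * y"
  by (simp add: mult_strict_mono')
lemma b2: "(x::real) < y \<Longrightarrow> y < 0 \<Longrightarrow> y * y < x * x"
  using b1[of "-y" "-x"] by simp
lemma xabs_strict:
  assumes "(x::real) < y" shows "x * \<bar>x\<bar> < y * \<bar>y\<bar>"
proof -
  consider "0 \<le> x" | "x < 0" "0 \<le> y" | "y < 0" using assms by linarith
  then show ?thesis
  proof cases
    case 1 then show ?thesis using b1[OF 1 assms] assms by simp
  next
    case 2
    have "0 < x * x" using 2 by (simp add: mult_neg_neg)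
    moreover have "0 \<le> y * y" by simp
    moreover have "x * \<bar>x\<bar> = - (x * x)" "y * \<bar>y\<bar> = y * y" using 2 by auto
    ultimately show ?thesis by linarith
  next
    case 3 then show ?thesis using b2[OF assms 3] assms by simp
  qed
qed


lemma Dform_sq:
  "Dform V E (\<lambda>i. a i - b i) (\<lambda>i. a i - b i) = Dform V E a a - 2 * Dform V E b a + Dform V E b b"
proof -
  have "Dform V E (\<lambda>i. a i - b i) (\<lambda>i. a i - b i) = (\<Sum>i\<in>V. \<Sum>j\<in>V.
      (if E i j then (a i - a j) * (a i - a j) else 0) - 2 * (if E i j then (b i - b j) * (a i - a j) else 0)
      + (if E i j then (b i - b j) * (b i - b j) else 0))"
    unfolding Dform_def by (intro sum.cong refl) (auto simp: algebra_simps)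
  also have "\<dots> = Dform V E a a - 2 * Dform V E b a + Dform V E b b"
    unfolding Dform_def by (simp only: sum.distrib sum_subtractf sum_distrib_left)
  finally show ?thesis .
qed

lemma Dform_nonneg_terms:
  "(if E i j then (y i - y j) * (y i - y j) else 0) \<ge> (0::real)"
  by auto

lemma clamp_lip: "\<bar>max lo (min hi (a::real)) - max lo (min hi b)\<bar> \<le> \<bar>a - b\<bar>"
  by (simp add: max_def min_def abs_if)


lemma main_bound:
  fixes \<phi> :: "nat \<Rightarrow> real"
  assumes G: "simple_graph V E" and st: "s \<in> V" "t \<in> V" "s \<noteq> t"
    and Lphi: "\<And>i. i \<in> V \<Longrightarrow> (\<Sum>j\<in>V. laplacian V E i j * \<phi> j) = ind_diff s t i"
    and orth: "\<And>k. (\<And>i. i \<in> V \<Longrightarrow> (\<Sum>j\<in>V. laplacian V E i j * k j) = 0) \<Longrightarrow> (\<Sum>i\<in>V. \<phi> i * k i) = 0"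
    and Rpos: "\<phi> t < \<phi> s"
  shows "\<exists>S\<subseteq>V. s \<in> S \<and> t \<in> V - S \<and> (Theta V E S)\<^sup>2 * (\<Sum>i\<in>V. (\<phi> i)\<^sup>2) \<le> 128 * dmax V E * (\<phi> s - \<phi> t)"
proof -
  have fin: "finite V" using G unfolding simple_graph_def by auto
  have EV: "E u v \<Longrightarrow> u \<in> V \<and> v \<in> V" for u v using G unfolding simple_graph_def by auto
  have sym: "E i j = E j i" for i j using G unfolding simple_graph_def by blast
  define n where "n = card V"
  have npos: "0 < n" unfolding n_def using fin st by (auto simp: card_gt_0_iff)
  define R where "R = \<phi> s - \<phi> t"
  have Rpos': "0 < R" unfolding R_def using Rpos by simp
  define d where "d = dmax V E"
  have degle: "real (Defs.degree V E u) \<le> d" if "u \<in> V" for u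
    unfolding d_def dmax_def using fin that by simp
  have dnn: "0 \<le> d" unfolding d_def dmax_def by simp
  define \<psi> where "\<psi> v = max (\<phi> t) (min (\<phi> s) (\<phi> v))" for v
  have \<psi>s: "\<psi> s = \<phi> s" and \<psi>t: "\<psi> t = \<phi> t" unfolding \<psi>_def using Rpos by auto
  have \<psi>rng: "\<psi> t \<le> \<psi> v \<and> \<psi> v \<le> \<psi> s" for v unfolding \<psi>_def using Rpos by auto
  have DPP0: "Dform V E \<phi> \<phi> = 2 * R"
  proof -
    have "(\<Sum>i\<in>V. \<phi> i * (\<Sum>j\<in>V. laplacian V E i j * \<phi> j)) = (\<Sum>i\<in>V. \<phi> i * ind_diff s t i)"
      using Lphi by simp
    also have "\<dots> = R" unfolding R_def using sum_ind_diff[OF fin st] .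
    finally show ?thesis using lap_form[OF G, of \<phi> \<phi>] by simp
  qed
  have DPF: "Dform V E \<psi> \<phi> = 2 * R"
  proof -
    have "(\<Sum>i\<in>V. \<psi> i * (\<Sum>j\<in>V. laplacian V E i j * \<phi> j)) = (\<Sum>i\<in>V. \<psi> i * ind_diff s t i)"
      using Lphi by simp
    also have "\<dots> = R" unfolding R_def using sum_ind_diff[OF fin st, of \<psi>] \<psi>s \<psi>t by simp
    finally show ?thesis using lap_form[OF G, of \<psi> \<phi>] by simp
  qed
  have DPSI: "Dform V E \<psi> \<psi> \<le> 2 * R"
  proof -
    have "Dform V E \<psi> \<psi> \<le> Dform V E \<phi> \<phi>"
      unfolding Dform_def
    proof (intro sum_mono)
      fix i j
      have "\<bar>\<psi> i - \<psi> j\<bar> \<le> \<bar>\<phi> i - \<phi> j\<bar>" unfolding \<psi>_def by (rule clamp_lip)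
      then have "(\<psi> i - \<psi> j) * (\<psi> i - \<psi> j) \<le> (\<phi> i - \<phi> j) * (\<phi> i - \<phi> j)"
        by (metis abs_le_square_iff power2_eq_square)
      then show "(if E i j then (\<psi> i - \<psi> j) * (\<psi> i - \<psi> j) else 0) \<le> (if E i j then (\<phi> i - \<phi> j) * (\<phi> i - \<phi> j) else 0)"
        by simp
    qed
    then show ?thesis using DPP0 by simp
  qed
  define w where "w v = \<phi> v - \<psi> v" for v
  have Dw: "Dform V E w w \<le> 0"
    using Dform_sq[of V E \<phi> \<psi>] DPP0 DPF DPSI unfolding w_def[abs_def] by simp
  have wedge: "w i = w j" if "E i j" for i j
  proof -
    have iV: "i \<in> V" and jV: "j \<in> V" using EV[OF that] by auto
    have nn: "\<forall>i\<in>V. 0 \<le> (\<Sum>j\<in>V. if E i j then (w i - w j) * (w i - w j) else 0)"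
      by (intro ballI sum_nonneg) auto
    have "Dform V E w w = 0" using Dw nn unfolding Dform_def by (meson order.antisym sum_nonneg)
    then have "(\<Sum>j\<in>V. if E i j then (w i - w j) * (w i - w j) else 0) = 0"
      using nn fin iV unfolding Dform_def by (simp add: sum_nonneg_eq_0_iff)
    then have "(if E i j then (w i - w j) * (w i - w j) else 0) = 0"
      using fin jV by (simp add: sum_nonneg_eq_0_iff)
    then show ?thesis using that by simp
  qed
  define m where "m = (\<Sum>v\<in>V. \<psi> v) / n"
  define k where "k v = w v + m" for v
  have Lk: "(\<Sum>j\<in>V. laplacian V E i j * k j) = 0" if "i \<in> V" for i
  proof -
    have "(\<Sum>j\<in>V. laplacian V E i j * k j) = (\<Sum>j\<in>V. if E i j then k i - k j else 0)"
      using lap_apply[OF G that] .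
    also have "\<dots> = 0" by (intro sum.neutral ballI) (auto simp: k_def wedge)
    finally show ?thesis .
  qed
  have phik: "(\<Sum>i\<in>V. \<phi> i * k i) = 0" using orth Lk by blast
  define a where "a v = \<psi> v - m" for v
  have a_eq: "a v = \<phi> v - k v" for v unfolding a_def k_def w_def by simp
  define Z where "Z = (\<Sum>v\<in>V. (a v)\<^sup>2)"
  have Zge: "(\<Sum>i\<in>V. (\<phi> i)\<^sup>2) \<le> Z"
  proof -
    have "Z = (\<Sum>i\<in>V. (\<phi> i)\<^sup>2) - 2 * (\<Sum>i\<in>V. \<phi> i * k i) + (\<Sum>i\<in>V. (k i)\<^sup>2)"
      unfolding Z_def a_eq by (simp add: power2_diff sum.distrib sum_subtractf sum_distrib_left mult.assoc)
    moreover have "0 \<le> (\<Sum>i\<in>V. (k i)\<^sup>2)" by (intro sum_nonneg) auto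
    ultimately show ?thesis using phik by simp
  qed
  have Znn: "0 \<le> Z" unfolding Z_def by (intro sum_nonneg) auto
  have suma: "(\<Sum>v\<in>V. a v) = 0"
    unfolding a_def m_def using npos by (simp add: sum_subtractf n_def)
  define g where "g v = a v * \<bar>a v\<bar>" for v
  have grng: "\<forall>v\<in>V. g t \<le> g v \<and> g v \<le> g s"
    unfolding g_def using \<psi>rng by (auto intro!: xabs_mono simp: a_def)
  have gst: "g t < g s" unfolding g_def a_def using \<psi>s \<psi>t Rpos by (intro xabs_strict) simp
  define Num where "Num = (\<Sum>u\<in>V. \<Sum>v\<in>V. if E u v then max 0 (g u - g v) else 0)"
  define Den where "Den = (\<Sum>u\<in>V. \<Sum>v\<in>V. max 0 (g u - g v))"
  obtain S where S: "S \<subseteq> V" "s \<in> S" "t \<in> V - S"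
    and cutS: "real (cut_size V E S) * Den \<le> 2 * Num * real (card S * card (V - S))"
    using coarea[OF G st(1,2) gst grng] unfolding Num_def Den_def by blast
  define p where "p u v = (if E u v then \<bar>\<psi> u - \<psi> v\<bar> else 0)" for u v
  define q where "q u v = (if E u v then \<bar>a u\<bar> + \<bar>a v\<bar> else 0)" for u v
  have Num_le: "Num \<le> (\<Sum>u\<in>V. \<Sum>v\<in>V. p u v * q u v)"
    unfolding Num_def
  proof (intro sum_mono)
    fix u v
    have "max 0 (g u - g v) \<le> \<bar>g u - g v\<bar>" by simp
    also have "\<dots> \<le> \<bar>a u - a v\<bar> * (\<bar>a u\<bar> + \<bar>a v\<bar>)" unfolding g_def by (rule xabs_upper)
    also have "a u - a v = \<psi> u - \<psi> v" unfolding a_def by simp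
    finally show "(if E u v then max 0 (g u - g v) else 0) \<le> p u v * q u v"
      unfolding p_def q_def by simp
  qed
  have Num_nn: "0 \<le> Num" unfolding Num_def by (intro sum_nonneg) auto
  have CS: "(\<Sum>u\<in>V. \<Sum>v\<in>V. p u v * q u v)\<^sup>2 \<le> (\<Sum>u\<in>V. \<Sum>v\<in>V. (p u v)\<^sup>2) * (\<Sum>u\<in>V. \<Sum>v\<in>V. (q u v)\<^sup>2)"
    using Cauchy_Schwarz_ineq_sum[of "\<lambda>x. p (fst x) (snd x)" "\<lambda>x. q (fst x) (snd x)" "V \<times> V"]
    by (simp add: sum.cartesian_product case_prod_beta)
  have P2: "(\<Sum>u\<in>V. \<Sum>v\<in>V. (p u v)\<^sup>2) \<le> 2 * R"
  proof -
    have "(\<Sum>u\<in>V. \<Sum>v\<in>V. (p u v)\<^sup>2) = Dform V E \<psi> \<psi>"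
      unfolding Dform_def p_def by (intro sum.cong refl) (simp add: power2_eq_square)
    then show ?thesis using DPSI by simp
  qed
  have Q2: "(\<Sum>u\<in>V. \<Sum>v\<in>V. (q u v)\<^sup>2) \<le> 4 * d * Z"
  proof -
    have "(\<Sum>u\<in>V. \<Sum>v\<in>V. (q u v)\<^sup>2) \<le> (\<Sum>u\<in>V. \<Sum>v\<in>V. (if E u v then 2 * (a u)\<^sup>2 else 0) + (if E u v then 2 * (a v)\<^sup>2 else 0))"
    proof (intro sum_mono)
      fix u v
      have "(\<bar>a u\<bar> + \<bar>a v\<bar>)\<^sup>2 \<le> 2 * (a u)\<^sup>2 + 2 * (a v)\<^sup>2"
        using zero_le_square[of "\<bar>a u\<bar> - \<bar>a v\<bar>"] by (simp add: power2_eq_square algebra_simps)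
      then show "(q u v)\<^sup>2 \<le> (if E u v then 2 * (a u)\<^sup>2 else 0) + (if E u v then 2 * (a v)\<^sup>2 else 0)"
        unfolding q_def by simp
    qed
    also have "\<dots> = (\<Sum>u\<in>V. \<Sum>v\<in>V. if E u v then 2 * (a u)\<^sup>2 else 0) + (\<Sum>u\<in>V. \<Sum>v\<in>V. if E u v then 2 * (a v)\<^sup>2 else 0)"
      by (simp only: sum.distrib)
    also have "(\<Sum>u\<in>V. \<Sum>v\<in>V. if E u v then 2 * (a v)\<^sup>2 else 0) = (\<Sum>u\<in>V. \<Sum>v\<in>V. if E u v then 2 * (a u)\<^sup>2 else 0)"
      by (subst sum.swap) (simp add: sym)
    also have "(\<Sum>u\<in>V. \<Sum>v\<in>V. if E u v then 2 * (a u)\<^sup>2 else 0) = (\<Sum>u\<in>V. 2 * (a u)\<^sup>2 * real (Defs.degree V E u))"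
    proof (intro sum.cong refl)
      fix u assume "u \<in> V"
      have "real (Defs.degree V E u) = (\<Sum>v\<in>V. if E u v then 1 else 0)"
        unfolding Defs.degree_def using fin by (simp add: sum.inter_filter[symmetric])
      then show "(\<Sum>v\<in>V. if E u v then 2 * (a u)\<^sup>2 else 0) = 2 * (a u)\<^sup>2 * real (Defs.degree V E u)"
        by (simp add: sum_distrib_left if_distrib cong: if_cong)
    qed
    also have "(\<Sum>u\<in>V. 2 * (a u)\<^sup>2 * real (Defs.degree V E u)) \<le> (\<Sum>u\<in>V. 2 * (a u)\<^sup>2 * d)"
      by (intro sum_mono mult_left_mono degle) auto
    also have "(\<Sum>u\<in>V. 2 * (a u)\<^sup>2 * d) = 2 * d * Z"
      unfolding Z_def by (simp add: sum_distrib_left sum_distrib_right algebra_simps)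
    finally show ?thesis by (simp add: algebra_simps)
  qed
  have Num2: "Num\<^sup>2 \<le> 8 * d * R * Z"
  proof -
    have "Num\<^sup>2 \<le> (\<Sum>u\<in>V. \<Sum>v\<in>V. p u v * q u v)\<^sup>2"
      using Num_le Num_nn by (intro power_mono) auto
    also have "\<dots> \<le> (\<Sum>u\<in>V. \<Sum>v\<in>V. (p u v)\<^sup>2) * (\<Sum>u\<in>V. \<Sum>v\<in>V. (q u v)\<^sup>2)" by (rule CS)
    also have "\<dots> \<le> (2 * R) * (4 * d * Z)"
      using P2 Q2 Rpos' by (intro mult_mono) (auto intro!: sum_nonneg)
    finally show ?thesis by (simp add: algebra_simps)
  qed
  have Den_ge: "real n * Z \<le> 2 * Den"
  proof -
    have "2 * Den = (\<Sum>u\<in>V. \<Sum>v\<in>V. max 0 (g u - g v)) + (\<Sum>u\<in>V. \<Sum>v\<in>V. max 0 (g v - g u))"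
      unfolding Den_def by (subst (2) sum.swap) simp
    also have "\<dots> = (\<Sum>u\<in>V. \<Sum>v\<in>V. \<bar>g u - g v\<bar>)"
      unfolding sum.distrib[symmetric] by (intro sum.cong refl) auto
    also have "\<dots> \<ge> (\<Sum>u\<in>V. \<Sum>v\<in>V. (a u - a v)\<^sup>2 / 2)"
      unfolding g_def using xabs_lower by (intro sum_mono) (simp add: field_simps)
    also have "(\<Sum>u\<in>V. \<Sum>v\<in>V. (a u - a v)\<^sup>2 / 2) = real n * Z"
    proof -
      have "(\<Sum>u\<in>V. \<Sum>v\<in>V. (a u - a v)\<^sup>2 / 2) = (\<Sum>u\<in>V. \<Sum>v\<in>V. ((a u)\<^sup>2 / 2 - a u * a v + (a v)\<^sup>2 / 2))"
        by (intro sum.cong refl) (simp add: power2_diff field_simps)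
      also have "\<dots> = (\<Sum>u\<in>V. real n * (a u)\<^sup>2 / 2 - a u * (\<Sum>v\<in>V. a v) + Z / 2)"
        unfolding Z_def n_def by (simp add: sum.distrib sum_subtractf sum_distrib_left sum_divide_distrib)
      also have "\<dots> = real n * Z"
        using suma unfolding Z_def by (simp add: sum.distrib sum_subtractf sum_distrib_left sum_divide_distrib n_def)
      finally show ?thesis .
    qed
    finally show ?thesis by simp
  qed
  define th where "th = Theta V E S"
  define ss where "ss = real (card S * card (V - S))"
  have cS: "0 < card S" using S fin by (subst card_gt_0_iff) (auto intro: finite_subset)
  have cVS: "0 < card (V - S)" using S fin by (subst card_gt_0_iff) auto
  have ss_pos: "0 < ss" using cS cVS unfolding ss_def by simp
  have th_eq: "th * ss = real n * real (cut_size V E S)"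
  proof -
    have "real (card S) * real (card (V - S)) \<noteq> 0" using cS cVS by simp
    then show ?thesis unfolding th_def Theta_def ss_def n_def by (simp add: field_simps)
  qed
  have th_nn: "0 \<le> th" unfolding th_def Theta_def by simp
  have "th * ss * Den \<le> real n * (2 * Num * ss)"
    using th_eq cutS mult_left_mono[OF cutS, of "real n"] unfolding ss_def by (simp add: algebra_simps)
  then have "th * Den \<le> real n * 2 * Num" using ss_pos
    by (simp add: algebra_simps)
  then have "th * (real n * Z) \<le> real n * 4 * Num"
    using Den_ge th_nn mult_left_mono[OF Den_ge th_nn] by (simp add: algebra_simps)
  then have thZ: "th * Z \<le> 4 * Num" using npos by (simp add: algebra_simps)
  have "(th * Z)\<^sup>2 \<le> (4 * Num)\<^sup>2"
    using thZ th_nn Znn by (intro power_mono) auto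
  then have thZ2: "th\<^sup>2 * Z * Z \<le> 128 * d * R * Z"
    using Num2 by (simp add: power_mult_distrib power2_eq_square algebra_simps)
  have "th\<^sup>2 * (\<Sum>i\<in>V. (\<phi> i)\<^sup>2) \<le> 128 * d * R"
  proof (cases "Z = 0")
    case True
    then have "(\<Sum>i\<in>V. (\<phi> i)\<^sup>2) \<le> 0" using Zge by simp
    then have "th\<^sup>2 * (\<Sum>i\<in>V. (\<phi> i)\<^sup>2) \<le> 0" by (simp add: mult_nonneg_nonpos)
    moreover have "0 \<le> 128 * d * R" using dnn Rpos' by simp
    ultimately show ?thesis by linarith
  next
    case False
    then have Zp: "0 < Z" using Znn by simp
    then have "th\<^sup>2 * Z \<le> 128 * d * R" using thZ2 by (simp add: algebra_simps)
    moreover have "th\<^sup>2 * (\<Sum>i\<in>V. (\<phi> i)\<^sup>2) \<le> th\<^sup>2 * Z" using Zge by (intro mult_left_mono) auto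
    ultimately show ?thesis by simp
  qed
  then show ?thesis using S unfolding th_def d_def R_def by blast
qed



definition mvec :: "nat set \<Rightarrow> mat \<Rightarrow> (nat \<Rightarrow> real) \<Rightarrow> (nat \<Rightarrow> real)" where
  "mvec V M y = (\<lambda>i. \<Sum>j\<in>V. M i j * y j)"

lemma mvec_mmult: "mvec V (mmult V A B) y = mvec V A (mvec V B y)"
  unfolding mvec_def mmult_def
  by (auto simp: fun_eq_iff sum_distrib_left sum_distrib_right mult.assoc intro: sum.swap)

lemma lap_supported: "supported V (laplacian V E)"
  unfolding supported_def laplacian_def by auto

lemma lap_sym: "simple_graph V E \<Longrightarrow> mtrans (laplacian V E) = laplacian V E"
  unfolding mtrans_def laplacian_def simple_graph_def by (auto simp: fun_eq_iff)

lemma edge_eq_of_Dform: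
  assumes G: "simple_graph V E" and D0: "Dform V E w w \<le> 0" and e: "E i j"
  shows "w i = w j"
proof -
  have fin: "finite V" using G unfolding simple_graph_def by auto
  have iV: "i \<in> V" and jV: "j \<in> V" using G e unfolding simple_graph_def by auto
  have nn: "\<forall>i\<in>V. 0 \<le> (\<Sum>j\<in>V. if E i j then (w i - w j) * (w i - w j) else 0)"
    by (intro ballI sum_nonneg) auto
  have "Dform V E w w = 0" using D0 nn unfolding Dform_def by (meson order.antisym sum_nonneg)
  then have "(\<Sum>j\<in>V. if E i j then (w i - w j) * (w i - w j) else 0) = 0"
    using nn fin iV unfolding Dform_def by (simp add: sum_nonneg_eq_0_iff)
  then have "(if E i j then (w i - w j) * (w i - w j) else 0) = 0"
    using fin jV by (simp add: sum_nonneg_eq_0_iff)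
  then show ?thesis using e by simp
qed

lemma connected_case:
  assumes G: "simple_graph V E" and st: "s \<in> V" "t \<in> V" "s \<noteq> t" and conn: "E\<^sup>*\<^sup>* s t"
  shows "\<exists>S\<subseteq>V. s \<in> S \<and> t \<in> V - S \<and>
        (Theta V E S = 0 \<or>
         (biharm V E s t)\<^sup>2 / eff_res V E s t \<le> 128 * dmax V E * inverse ((Theta V E S)\<^sup>2))"
proof -
  have fin: "finite V" using G unfolding simple_graph_def by auto
  define L where "L = laplacian V E"
  define P where "P = pinv V L"
  have sL: "supported V L" unfolding L_def by (rule lap_supported)
  have symL: "mtrans L = L" unfolding L_def using G by (rule lap_sym)
  have PP: "supported V P \<and> mtrans P = P \<and> mmult V L P = mmult V P L
    \<and> mmult V (mmult V P L) P = P \<and> mmult V (mmult V L P) L = L"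
    unfolding P_def by (rule pinv_props[OF fin sL symL])
  then have sP: "supported V P" and symP: "mtrans P = P" and LP: "mmult V L P = mmult V P L"
    and PLP: "mmult V (mmult V P L) P = P" and LPL: "mmult V (mmult V L P) L = L" by auto
  have Psym: "P i j = P j i" for i j using symP unfolding mtrans_def by metis
  define x where "x = ind_diff s t"
  define \<phi> where "\<phi> = mvec V P x"
  define y where "y = mvec V L \<phi>"
  have y_eq: "y = mvec V (mmult V L P) x" unfolding y_def \<phi>_def by (simp add: mvec_mmult)
  define w where "w i = x i - y i" for i
  have LLP: "mmult V L (mmult V L P) = L"
    using LPL LP by (metis massoc)
  have Lw: "mvec V L w = (\<lambda>i. 0)"
  proof -
    have "mvec V L y = mvec V L x" unfolding y_eq by (simp add: mvec_mmult[symmetric] LLP)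
    then show ?thesis unfolding w_def mvec_def
      by (auto simp: fun_eq_iff right_diff_distrib sum_subtractf)
  qed
  have Dw: "Dform V E w w \<le> 0"
    using lap_form[OF G, of w w] Lw unfolding mvec_def L_def by (simp add: fun_eq_iff)
  have wc: "E\<^sup>*\<^sup>* s v \<Longrightarrow> w v = w s" for v
    by (induction rule: rtranclp_induct) (auto dest: edge_eq_of_Dform[OF G Dw])
  have LPsym: "mmult V L P i j = mmult V L P j i" for i j
  proof -
    have "mtrans (mmult V L P) = mmult V L P" by (simp add: mtrans_mmult symP symL LP)
    then show ?thesis unfolding mtrans_def by metis
  qed
  have "(\<Sum>i\<in>V. w i * w i) = 0"
  proof -
    have ww: "w i * w i = w i * x i - w i * y i" for i
    proof -
      have "w i * w i = w i * (x i - y i)" by (simp add: w_def)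
      then show ?thesis by (simp only: right_diff_distrib)
    qed
    have "(\<Sum>i\<in>V. w i * w i) = (\<Sum>i\<in>V. w i * x i) - (\<Sum>i\<in>V. w i * y i)"
      unfolding sum_subtractf[symmetric] by (intro sum.cong refl) (rule ww)
    moreover have "(\<Sum>i\<in>V. w i * x i) = 0"
      unfolding x_def using sum_ind_diff[OF fin st, of w] wc[OF conn] by simp
    moreover have "(\<Sum>i\<in>V. w i * y i) = 0"
    proof -
      have "(\<Sum>i\<in>V. w i * y i) = (\<Sum>j\<in>V. x j * (\<Sum>i\<in>V. mmult V L P j i * w i))"
        unfolding y_eq mvec_def
        by (simp add: sum_distrib_left sum_distrib_right algebra_simps) (subst sum.swap, simp add: LPsym mult.commute mult.left_commute)
      also have "\<dots> = (\<Sum>j\<in>V. x j * mvec V (mmult V P L) w j)"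
        unfolding mvec_def LP ..
      also have "\<dots> = 0"
      proof -
        have "mvec V (mmult V P L) w = mvec V P (\<lambda>i. 0)" by (simp only: mvec_mmult Lw)
        also have "\<dots> = (\<lambda>i. 0)" by (simp add: mvec_def)
        finally show ?thesis by simp
      qed
      finally show ?thesis .
    qed
    ultimately show ?thesis by simp
  qed
  then have w0: "w i = 0" if "i \<in> V" for i
    using fin that by (simp add: sum_nonneg_eq_0_iff)
  have Lphi: "(\<Sum>j\<in>V. laplacian V E i j * \<phi> j) = ind_diff s t i" if "i \<in> V" for i
    using w0[OF that] unfolding w_def y_def mvec_def L_def x_def by simp
  have orth: "(\<Sum>i\<in>V. \<phi> i * k i) = 0"
    if Lk: "\<And>i. i \<in> V \<Longrightarrow> (\<Sum>j\<in>V. laplacian V E i j * k j) = 0" for k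
  proof -
    have mLk: "mvec V L k = (\<lambda>i. 0)"
    proof
      fix i show "mvec V L k i = 0"
      proof (cases "i \<in> V")
        case True then show ?thesis using Lk unfolding mvec_def L_def by simp
      next
        case False then show ?thesis using sL unfolding mvec_def supported_def by simp
      qed
    qed
    have Pdec: "P = mmult V (mmult V P P) L"
      using PLP LP by (metis massoc)
    have Pk: "mvec V P k = (\<lambda>i. 0)"
    proof -
      have "mvec V P k = mvec V (mmult V P P) (\<lambda>i. 0)" by (subst Pdec) (simp only: mvec_mmult mLk)
      also have "\<dots> = (\<lambda>i. 0)" by (simp add: mvec_def)
      finally show ?thesis .
    qed
    have "(\<Sum>i\<in>V. \<phi> i * k i) = (\<Sum>i\<in>V. \<Sum>j\<in>V. x j * (P j i * k i))"
    proof (intro sum.cong refl)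
      fix i
      have "\<phi> i * k i = (\<Sum>j\<in>V. P i j * x j * k i)"
        unfolding \<phi>_def mvec_def by (simp add: sum_distrib_right)
      also have "\<dots> = (\<Sum>j\<in>V. x j * (P j i * k i))"
        apply (intro sum.cong refl)
        subgoal for j by (simp add: Psym[of j i] mult_ac)
        done
      finally show "\<phi> i * k i = (\<Sum>j\<in>V. x j * (P j i * k i))" .
    qed
    also have "\<dots> = (\<Sum>j\<in>V. \<Sum>i\<in>V. x j * (P j i * k i))" by (rule sum.swap)
    also have "\<dots> = (\<Sum>j\<in>V. x j * (\<Sum>i\<in>V. P j i * k i))" by (simp add: sum_distrib_left)
    also have "\<dots> = 0" using Pk unfolding mvec_def by (simp add: fun_eq_iff)
    finally show ?thesis .
  qed
  have R_eq: "eff_res V E s t = \<phi> s - \<phi> t"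
  proof -
    have "eff_res V E s t = (\<Sum>i\<in>V. \<phi> i * x i)"
      unfolding eff_res_def quad_def P_def[symmetric] L_def[symmetric] x_def[symmetric] \<phi>_def mvec_def
      by (simp add: sum_distrib_left sum_distrib_right algebra_simps)
    then show ?thesis unfolding x_def using sum_ind_diff[OF fin st, of \<phi>] by simp
  qed
  have B_eq: "(biharm V E s t)\<^sup>2 = (\<Sum>i\<in>V. (\<phi> i)\<^sup>2)"
  proof -
    have "quad V (mmult V P P) x = (\<Sum>k\<in>V. (\<phi> k)\<^sup>2)"
    proof -
      have "quad V (mmult V P P) x = (\<Sum>i\<in>V. \<Sum>j\<in>V. \<Sum>k\<in>V. x i * P i k * P k j * x j)"
        unfolding quad_def mmult_def by (simp add: sum_distrib_left sum_distrib_right mult_ac)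
      also have "\<dots> = (\<Sum>i\<in>V. \<Sum>k\<in>V. \<Sum>j\<in>V. x i * P i k * P k j * x j)"
        by (rule sum.cong[OF refl]) (rule sum.swap)
      also have "\<dots> = (\<Sum>k\<in>V. \<Sum>i\<in>V. \<Sum>j\<in>V. x i * P i k * P k j * x j)"
        by (rule sum.swap)
      also have "\<dots> = (\<Sum>k\<in>V. (\<phi> k)\<^sup>2)"
      proof (intro sum.cong refl)
        fix k
        have "(\<phi> k)\<^sup>2 = (\<Sum>i\<in>V. P k i * x i) * (\<Sum>j\<in>V. P k j * x j)"
          unfolding \<phi>_def mvec_def power2_eq_square ..
        also have "\<dots> = (\<Sum>i\<in>V. \<Sum>j\<in>V. P k i * x i * (P k j * x j))"
          by (simp add: sum_product)
        also have "\<dots> = (\<Sum>i\<in>V. \<Sum>j\<in>V. x i * P i k * P k j * x j)"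
          apply (intro sum.cong refl)
          subgoal for i j by (simp add: Psym[of k i] mult_ac)
          done
        finally show "(\<Sum>i\<in>V. \<Sum>j\<in>V. x i * P i k * P k j * x j) = (\<phi> k)\<^sup>2" by simp
      qed
      finally show ?thesis .
    qed
    moreover have "0 \<le> (\<Sum>k\<in>V. (\<phi> k)\<^sup>2)" by (intro sum_nonneg) auto
    ultimately show ?thesis
      unfolding biharm_def Let_def P_def[symmetric] L_def[symmetric] x_def[symmetric] by simp
  qed
  show ?thesis
  proof (cases "\<phi> t < \<phi> s")
    case False
    have "{s} \<subseteq> V" "s \<in> {s}" "t \<in> V - {s}" using st by auto
    moreover have "(biharm V E s t)\<^sup>2 / eff_res V E s t \<le> 0"
      using False R_eq by (simp add: divide_nonneg_nonpos)
    moreover have "0 \<le> 128 * dmax V E * inverse ((Theta V E {s})\<^sup>2)"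
      unfolding dmax_def by simp
    ultimately show ?thesis by (meson order.trans)
  next
    case True
    obtain S where S: "S \<subseteq> V" "s \<in> S" "t \<in> V - S"
      and b: "(Theta V E S)\<^sup>2 * (\<Sum>i\<in>V. (\<phi> i)\<^sup>2) \<le> 128 * dmax V E * (\<phi> s - \<phi> t)"
      using main_bound[OF G st Lphi orth True] by blast
    show ?thesis
    proof (cases "Theta V E S = 0")
      case False
      then have th2: "0 < (Theta V E S)\<^sup>2" by simp
      have Rp: "0 < eff_res V E s t" using R_eq True by simp
      have "(biharm V E s t)\<^sup>2 / eff_res V E s t \<le> 128 * dmax V E * inverse ((Theta V E S)\<^sup>2)"
        using b th2 Rp unfolding B_eq R_eq[symmetric]
        by (simp add: divide_le_eq field_simps)
      then show ?thesis using S by blast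
    qed (use S in blast)
  qed
qed


theorem theoremE3:
  "\<exists>C > 0. \<forall>V E s t. simple_graph V E \<and> s \<in> V \<and> t \<in> V \<and> s \<noteq> t \<longrightarrow>
     (\<exists>S \<subseteq> V. s \<in> S \<and> t \<in> V - S \<and>
        (Theta V E S = 0 \<or>
         (biharm V E s t)\<^sup>2 / eff_res V E s t \<le> C * dmax V E * inverse ((Theta V E S)\<^sup>2)))"
proof (intro exI[of _ "128::real"] conjI allI impI)
  show "(0::real) < 128" by simp
  fix V E s t
  assume H: "simple_graph V E \<and> s \<in> V \<and> t \<in> V \<and> s \<noteq> t"
  then have G: "simple_graph V E" and st: "s \<in> V" "t \<in> V" "s \<noteq> t" by auto
  show "\<exists>S \<subseteq> V. s \<in> S \<and> t \<in> V - S \<and>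
        (Theta V E S = 0 \<or>
         (biharm V E s t)\<^sup>2 / eff_res V E s t \<le> 128 * dmax V E * inverse ((Theta V E S)\<^sup>2))"
  proof (cases "E\<^sup>*\<^sup>* s t")
    case True
    then show ?thesis using connected_case[OF G st] by blast
  next
    case False
    define S where "S = {v\<in>V. E\<^sup>*\<^sup>* s v}"
    have S: "S \<subseteq> V" "s \<in> S" "t \<in> V - S" unfolding S_def using st False by auto
    have "{(u, v). u \<in> S \<and> v \<in> V - S \<and> E u v} = {}"
      unfolding S_def by (auto intro: rtranclp.rtrancl_into_rtrancl)
    then have "cut_size V E S = 0" unfolding cut_size_def by (simp only: card.empty)
    then have "Theta V E S = 0" unfolding Theta_def by simp
    then show ?thesis using S by blast
  qed
qed


end
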